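(* Let $(S,<_S)$ be an order. The following are equivalent: (1) $(S,<_S)$ does not embed $R_{2,2}$; (2) for every $x,x'\in S$ the sets $u(x),u(x')$ are $\subseteq$-comparable; (3) for every $x,x'\in S$ the sets $d(x),d(x')$ are $\subseteq$-comparable.
   Context: An order $(S,<_S)$ is a set with a strict partial order (antisymmetric, transitive). An embedding of $(S,<_S)$ into $(R,<_R)$ is an injection $\pi$ with $x<_S y\iff\pi(x)<_R\pi(y)$. $R_{2,2}$ is the order on four elements $\{x_0,x_1,y_0,y_1\}$ whose only relations are $x_0<y_0$ and $x_1<y_1$. For $x\in S$: $d(x)=\{z\in S\mid z<_S x\}$ and $u(x)=\{z\in S\mid x<_S z\}$. *)

theory Defs
  imports Main
begin

definition strict_order :: "'a set \<Rightarrow> ('a \<Rightarrow> 'a \<Rightarrow> bool) \<Rightarrow> bool" where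
  "strict_order S lt \<longleftrightarrow>
     (\<forall>x\<in>S. \<not> lt x x) \<and>
     (\<forall>x\<in>S. \<forall>y\<in>S. lt x y \<longrightarrow> \<not> lt y x) \<and>
     (\<forall>x\<in>S. \<forall>y\<in>S. \<forall>z\<in>S. lt x y \<longrightarrow> lt y z \<longrightarrow> lt x z)"

definition embeds :: "'b set \<Rightarrow> ('b \<Rightarrow> 'b \<Rightarrow> bool) \<Rightarrow> 'a set \<Rightarrow> ('a \<Rightarrow> 'a \<Rightarrow> bool) \<Rightarrow> bool" where
  "embeds T ltT S ltS \<longleftrightarrow>
     (\<exists>\<pi>. inj_on \<pi> T \<and> \<pi> ` T \<subseteq> S \<and>
          (\<forall>x\<in>T. \<forall>y\<in>T. ltT x y \<longleftrightarrow> ltS (\<pi> x) (\<pi> y)))"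

datatype R22_elem = X0 | X1 | Y0 | Y1

definition R22_less :: "R22_elem \<Rightarrow> R22_elem \<Rightarrow> bool" where
  "R22_less a b \<longleftrightarrow> (a = X0 \<and> b = Y0) \<or> (a = X1 \<and> b = Y1)"

definition down_set :: "'a set \<Rightarrow> ('a \<Rightarrow> 'a \<Rightarrow> bool) \<Rightarrow> 'a \<Rightarrow> 'a set" where
  "down_set S lt x = {z \<in> S. lt z x}"

definition up_set :: "'a set \<Rightarrow> ('a \<Rightarrow> 'a \<Rightarrow> bool) \<Rightarrow> 'a \<Rightarrow> 'a set" where
  "up_set S lt x = {z \<in> S. lt x z}"

end

theory Submission
  imports Defs
begin

lemma emb_suff:
  assumes so: "strict_order S lt" and h: "a\<in>S" "b\<in>S" "c\<in>S" "d\<in>S" "lt a c" "lt b d" "\<not> lt a d" "\<not> lt b c"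
  shows "embeds (UNIV :: R22_elem set) R22_less S lt"
proof -
  have irr: "\<And>x. x\<in>S \<Longrightarrow> \<not> lt x x" and tr: "\<And>x y z. x\<in>S \<Longrightarrow> y\<in>S \<Longrightarrow> z\<in>S \<Longrightarrow> lt x y \<Longrightarrow> lt y z \<Longrightarrow> lt x z"
    and as: "\<And>x y. x\<in>S \<Longrightarrow> y\<in>S \<Longrightarrow> lt x y \<Longrightarrow> \<not> lt y x"
    using so unfolding strict_order_def by blast+
  have n1: "\<not> lt a b" using tr[of a b d] h by blast
  have n2: "\<not> lt b a" using tr[of b a c] h by blast
  have n3: "\<not> lt c d" using tr[of a c d] h by blast
  have n4: "\<not> lt d c" using tr[of b d c] h by blast
  have n5: "\<not> lt d a" using tr[of d a c] tr[of b d c] h by blast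
  have n6: "\<not> lt c b" using tr[of c b d] tr[of a c d] h by blast
  have n7: "\<not> lt c a" "\<not> lt d b" using as h by blast+
  have d1: "a \<noteq> b" "a \<noteq> c" "a \<noteq> d" "b \<noteq> c" "b \<noteq> d" "c \<noteq> d"
    using h irr n1 n3 n4 by auto
  define \<pi> where "\<pi> = case_R22_elem a b c d"
  show ?thesis
    unfolding embeds_def
  proof (intro exI[of _ \<pi>] conjI)
    show "inj_on \<pi> UNIV"
      unfolding inj_on_def \<pi>_def
      apply (intro ballI impI) subgoal for x y by (cases x; cases y) (use d1 in simp_all)
      done
    show "\<pi> ` UNIV \<subseteq> S" unfolding \<pi>_def using h
      by (auto split: R22_elem.splits)
    show "\<forall>x\<in>UNIV. \<forall>y\<in>UNIV. R22_less x y = lt (\<pi> x) (\<pi> y)"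
      unfolding \<pi>_def R22_less_def
      apply (intro ballI) subgoal for x y by (cases x; cases y) (use h irr n1 n2 n3 n4 n5 n6 n7 in simp_all)
      done
  qed
qed

lemma emb_char:
  assumes so: "strict_order S lt"
  shows "embeds (UNIV :: R22_elem set) R22_less S lt \<longleftrightarrow>
    (\<exists>a\<in>S. \<exists>b\<in>S. \<exists>c\<in>S. \<exists>d\<in>S. lt a c \<and> lt b d \<and> \<not> lt a d \<and> \<not> lt b c)"
proof
  assume "embeds (UNIV :: R22_elem set) R22_less S lt"
  then obtain \<pi> where p: "inj_on \<pi> UNIV" "\<pi> ` UNIV \<subseteq> S" "\<forall>x\<in>UNIV. \<forall>y\<in>UNIV. R22_less x y \<longleftrightarrow> lt (\<pi> x) (\<pi> y)"
    unfolding embeds_def by (elim exE conjE) (rule that)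
  show "\<exists>a\<in>S. \<exists>b\<in>S. \<exists>c\<in>S. \<exists>d\<in>S. lt a c \<and> lt b d \<and> \<not> lt a d \<and> \<not> lt b c"
  proof -
    have r: "R22_less x y \<longleftrightarrow> lt (\<pi> x) (\<pi> y)" for x y using p(3) by simp
    have m: "\<pi> x \<in> S" for x using p(2) by blast
    have "lt (\<pi> X0) (\<pi> Y0)" "lt (\<pi> X1) (\<pi> Y1)" "\<not> lt (\<pi> X0) (\<pi> Y1)" "\<not> lt (\<pi> X1) (\<pi> Y0)"
      using r[of X0 Y0] r[of X1 Y1] r[of X0 Y1] r[of X1 Y0] by (simp_all add: R22_less_def)
    then show ?thesis using m by blast
  qed
next
  assume "\<exists>a\<in>S. \<exists>b\<in>S. \<exists>c\<in>S. \<exists>d\<in>S. lt a c \<and> lt b d \<and> \<not> lt a d \<and> \<not> lt b c"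
  then obtain a b c d where h: "a\<in>S" "b\<in>S" "c\<in>S" "d\<in>S" "lt a c" "lt b d" "\<not> lt a d" "\<not> lt b c"
    by blast
  show "embeds (UNIV :: R22_elem set) R22_less S lt" by (rule emb_suff[OF so h])
qed

theorem lemma2p4:
  fixes S :: "'a set" and lt :: "'a \<Rightarrow> 'a \<Rightarrow> bool"
  assumes "strict_order S lt"
  shows "(\<not> embeds (UNIV :: R22_elem set) R22_less S lt
            \<longleftrightarrow> (\<forall>x\<in>S. \<forall>x'\<in>S. up_set S lt x \<subseteq> up_set S lt x' \<or> up_set S lt x' \<subseteq> up_set S lt x))
       \<and> (\<not> embeds (UNIV :: R22_elem set) R22_less S lt
            \<longleftrightarrow> (\<forall>x\<in>S. \<forall>x'\<in>S. down_set S lt x \<subseteq> down_set S lt x' \<or> down_set S lt x' \<subseteq> down_set S lt x))"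
proof -
  let ?E = "\<exists>a\<in>S. \<exists>b\<in>S. \<exists>c\<in>S. \<exists>d\<in>S. lt a c \<and> lt b d \<and> \<not> lt a d \<and> \<not> lt b c"
  have u: "(\<not> ?E) \<longleftrightarrow> (\<forall>x\<in>S. \<forall>x'\<in>S. up_set S lt x \<subseteq> up_set S lt x' \<or> up_set S lt x' \<subseteq> up_set S lt x)"
  proof
    assume "\<not> ?E"
    then show "\<forall>x\<in>S. \<forall>x'\<in>S. up_set S lt x \<subseteq> up_set S lt x' \<or> up_set S lt x' \<subseteq> up_set S lt x"
    proof (intro ballI)
      fix x x' assume xs: "x\<in>S" "x'\<in>S"
      show "up_set S lt x \<subseteq> up_set S lt x' \<or> up_set S lt x' \<subseteq> up_set S lt x"
      proof (rule ccontr)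
        assume "\<not> ?thesis"
        then obtain p q where "p \<in> up_set S lt x" "p \<notin> up_set S lt x'" "q \<in> up_set S lt x'" "q \<notin> up_set S lt x" by blast
        then have "p\<in>S" "q\<in>S" "lt x p" "lt x' q" "\<not> lt x q" "\<not> lt x' p" unfolding up_set_def by auto
        then show False using `\<not> ?E` xs by blast
      qed
    qed
  next
    assume H: "\<forall>x\<in>S. \<forall>x'\<in>S. up_set S lt x \<subseteq> up_set S lt x' \<or> up_set S lt x' \<subseteq> up_set S lt x"
    show "\<not> ?E"
    proof
      assume ?E
      then obtain a b c d where h: "a\<in>S" "b\<in>S" "c\<in>S" "d\<in>S" "lt a c" "lt b d" "\<not> lt a d" "\<not> lt b c" by blast
      from H h(1,2) have "up_set S lt a \<subseteq> up_set S lt b \<or> up_set S lt b \<subseteq> up_set S lt a" by blast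
      then show False unfolding up_set_def using h by blast
    qed
  qed
  have dn: "(\<not> ?E) \<longleftrightarrow> (\<forall>x\<in>S. \<forall>x'\<in>S. down_set S lt x \<subseteq> down_set S lt x' \<or> down_set S lt x' \<subseteq> down_set S lt x)"
  proof
    assume "\<not> ?E"
    then show "\<forall>x\<in>S. \<forall>x'\<in>S. down_set S lt x \<subseteq> down_set S lt x' \<or> down_set S lt x' \<subseteq> down_set S lt x"
    proof (intro ballI)
      fix x x' assume xs: "x\<in>S" "x'\<in>S"
      show "down_set S lt x \<subseteq> down_set S lt x' \<or> down_set S lt x' \<subseteq> down_set S lt x"
      proof (rule ccontr)
        assume "\<not> ?thesis"
        then obtain p q where "p \<in> down_set S lt x" "p \<notin> down_set S lt x'" "q \<in> down_set S lt x'" "q \<notin> down_set S lt x" by blast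
        then have "p\<in>S" "q\<in>S" "lt p x" "lt q x'" "\<not> lt q x" "\<not> lt p x'" unfolding down_set_def by auto
        then show False using `\<not> ?E` xs by blast
      qed
    qed
  next
    assume H: "\<forall>x\<in>S. \<forall>x'\<in>S. down_set S lt x \<subseteq> down_set S lt x' \<or> down_set S lt x' \<subseteq> down_set S lt x"
    show "\<not> ?E"
    proof
      assume ?E
      then obtain a b c d where h: "a\<in>S" "b\<in>S" "c\<in>S" "d\<in>S" "lt a c" "lt b d" "\<not> lt a d" "\<not> lt b c" by blast
      from H h(3,4) have "down_set S lt c \<subseteq> down_set S lt d \<or> down_set S lt d \<subseteq> down_set S lt c" by blast
      then show False unfolding down_set_def using h by blast
    qed
  qed
  show ?thesis unfolding emb_char[OF assms] using u dn by blast
qed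

end
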